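(* Let $N\ge2$, $R>0$, let $g:[0,R]\to(0,\infty)$ be smooth, let $A,B,p,q$ be positive constants with $A\neq B$, and let $\kappa\in(0,1)$, all independent of $\epsilon$. For $\epsilon>0$ let $U_\epsilon\in C^1([0,R])\cap C^\infty((0,R))$ be the unique solution of problem (N* ) described in the context, and set $I_p=\int_0^R s^{N-1}e^{pU_\epsilon(s)}ds$, $I_q=\int_0^R s^{N-1}e^{-qU_\epsilon(s)}ds$, $$\Lambda_{1,\epsilon}(R)=\frac{\epsilon^2}{2}\int_0^R\frac{(N-2)g(s)+sg'(s)}{R^N}s^{N-1}U_\epsilon'(s)^2ds,$$ $$\Lambda_{2,\epsilon}(R)=-\frac{\epsilon^2}{2}g(\epsilon^\kappa)U_\epsilon'(\epsilon^\kappa)^2+\frac{\epsilon^2}{2}\int_{\epsilon^\kappa}^R\frac{2(N-1)g(s)+sg'(s)}{s}U_\epsilon'(s)^2ds.$$ Then $$\frac{R^N}{N}\Big(\frac{Ae^{pU_\epsilon(R)}}{pI_p}+\frac{Be^{-qU_\epsilon(R)}}{qI_q}\Big)=\frac{R^2(A-B)^2}{2N^2\epsilon^2g(R)}+\frac Ap+\frac Bq+\Lambda_{1,\epsilon}(R),$$ and $$\frac{R^N}{N}\Big(\frac{Ae^{pU_\epsilon(\epsilon^\kappa)}}{pI_p}+\frac{Be^{-qU_\epsilon(\epsilon^\kappa)}}{qI_q}\Big)=\frac Ap+\frac Bq+\Lambda_{1,\epsilon}(R)-\Lambda_{2,\epsilon}(R).$$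
   Context: Problem (N* ): for $\epsilon>0$, find $U_\epsilon\in C^1([0,R])\cap C^\infty((0,R))$ such that for $r\in(0,R)$ $$\epsilon^2 g(r)\Big[U_\epsilon''(r)+\Big(\frac{N-1}{r}+\frac{g'(r)}{g(r)}\Big)U_\epsilon'(r)\Big]=\frac{R^N}{N}\Big(\frac{Ae^{pU_\epsilon(r)}}{\int_0^R s^{N-1}e^{pU_\epsilon(s)}ds}-\frac{Be^{-qU_\epsilon(r)}}{\int_0^R s^{N-1}e^{-qU_\epsilon(s)}ds}\Big),$$ together with $\int_0^R s^{N-1}U_\epsilon(s)\,ds=0$, $U_\epsilon'(0)=0$ and $U_\epsilon'(R)=\frac{R(A-B)}{\epsilon^2Ng(R)}$; it has a unique solution. Integrals $\int_a^b$ with $a>b$ are understood as $-\int_b^a$. *)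

theory Defs
  imports "HOL-Analysis.Analysis"
begin

definition C_inf_on :: "real set \<Rightarrow> (real \<Rightarrow> real) \<Rightarrow> bool" where
  "C_inf_on S f \<longleftrightarrow> (\<exists>D. D 0 = f \<and>
      (\<forall>n. \<forall>x\<in>S. (D n has_real_derivative D (Suc n) x) (at x within S)))"

end

theory Submission
  imports Defs
begin

theorem lemma3p6:
  fixes N :: nat and R \<epsilon> \<kappa> A B p q :: real
    and g gd U Ud Udd :: "real \<Rightarrow> real"
  assumes N: "N \<ge> 2" and R: "R > 0"
    and g_smooth: "C_inf_on {0..R} g"
    and g_pos: "\<forall>x\<in>{0..R}. g x > 0"
    and gd: "\<forall>x\<in>{0..R}. (g has_real_derivative gd x) (at x within {0..R})"
    and A: "A > 0" and B: "B > 0" and p: "p > 0" and q: "q > 0" and AB: "A \<noteq> B"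
    and \<kappa>: "0 < \<kappa>" "\<kappa> < 1"
    and \<epsilon>: "\<epsilon> > 0" and \<epsilon>\<kappa>: "\<epsilon> powr \<kappa> \<le> R"
    \<comment> \<open>U is C^1 on [0,R] with derivative Ud, and C^\<infinity> on (0,R) with second derivative Udd\<close>
    and U_C1: "\<forall>x\<in>{0..R}. (U has_real_derivative Ud x) (at x within {0..R})"
    and Ud_cont: "continuous_on {0..R} Ud"
    and U_smooth: "C_inf_on {0<..<R} U"
    and Udd: "\<forall>x\<in>{0<..<R}. (Ud has_real_derivative Udd x) (at x)"
    \<comment> \<open>U solves problem (N*)\<close>
    and eq: "\<forall>r\<in>{0<..<R}.
        \<epsilon>\<^sup>2 * g r * (Udd r + ((real N - 1) / r + gd r / g r) * Ud r)
        = R ^ N / real N *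
          (A * exp (p * U r) / integral {0..R} (\<lambda>s. s ^ (N - 1) * exp (p * U s))
         - B * exp (- q * U r) / integral {0..R} (\<lambda>s. s ^ (N - 1) * exp (- q * U s)))"
    and mean0: "integral {0..R} (\<lambda>s. s ^ (N - 1) * U s) = 0"
    and bc0: "Ud 0 = 0"
    and bcR: "Ud R = R * (A - B) / (\<epsilon>\<^sup>2 * real N * g R)"
  shows
   "let Ip = integral {0..R} (\<lambda>s. s ^ (N - 1) * exp (p * U s));
        Iq = integral {0..R} (\<lambda>s. s ^ (N - 1) * exp (- q * U s));
        \<Lambda>1 = \<epsilon>\<^sup>2 / 2 * integral {0..R}
               (\<lambda>s. ((real N - 2) * g s + s * gd s) / R ^ N * s ^ (N - 1) * (Ud s)\<^sup>2);
        \<Lambda>2 = - \<epsilon>\<^sup>2 / 2 * g (\<epsilon> powr \<kappa>) * (Ud (\<epsilon> powr \<kappa>))\<^sup>2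
             + \<epsilon>\<^sup>2 / 2 * integral {\<epsilon> powr \<kappa>..R}
               (\<lambda>s. (2 * (real N - 1) * g s + s * gd s) / s * (Ud s)\<^sup>2)
    in R ^ N / real N * (A * exp (p * U R) / (p * Ip) + B * exp (- q * U R) / (q * Iq))
         = R\<^sup>2 * (A - B)\<^sup>2 / (2 * (real N)\<^sup>2 * \<epsilon>\<^sup>2 * g R) + A / p + B / q + \<Lambda>1
     \<and> R ^ N / real N * (A * exp (p * U (\<epsilon> powr \<kappa>)) / (p * Ip)
                         + B * exp (- q * U (\<epsilon> powr \<kappa>)) / (q * Iq))
         = A / p + B / q + \<Lambda>1 - \<Lambda>2"
proof -
  define Ip where "Ip = integral {0..R} (\<lambda>s. s ^ (N - 1) * exp (p * U s))"
  define Iq where "Iq = integral {0..R} (\<lambda>s. s ^ (N - 1) * exp (- q * U s))"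
  define a where "a = \<epsilon> powr \<kappa>"
  have Npos: "real N > 0" using N by simp
  have a0: "0 < a" using \<epsilon> by (simp add: a_def)
  have aR: "a \<le> R" using \<epsilon>\<kappa> by (simp add: a_def)
  have Ucont: "continuous_on {0..R} U"
    using U_C1 by (meson DERIV_continuous continuous_on_eq_continuous_within)
  have gcont: "continuous_on {0..R} g"
    using gd by (meson DERIV_continuous continuous_on_eq_continuous_within)
  have Uder: "(U has_real_derivative Ud x) (at x)" if "x \<in> {0<..<R}" for x
  proof -
    have "(U has_real_derivative Ud x) (at x within {0..R})" using U_C1 that by auto
    moreover have "at x within {0..R} = at x" using that by (intro at_within_interior) auto
    ultimately show ?thesis by simp
  qed
  have gder: "(g has_real_derivative gd x) (at x)" if "x \<in> {0<..<R}" for x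
  proof -
    have "(g has_real_derivative gd x) (at x within {0..R})" using gd that by auto
    moreover have "at x within {0..R} = at x" using that by (intro at_within_interior) auto
    ultimately show ?thesis by simp
  qed
  have Ipc: "continuous_on {0..R} (\<lambda>s. s ^ (N - 1) * exp (p * U s))"
    by (intro continuous_intros Ucont)
  have Iqc: "continuous_on {0..R} (\<lambda>s. s ^ (N - 1) * exp (- q * U s))"
    by (intro continuous_intros Ucont)
  have Iphas: "((\<lambda>s. s ^ (N - 1) * exp (p * U s)) has_integral Ip) {0..R}"
    unfolding Ip_def using Ipc integrable_continuous_interval has_integral_integral by blast
  have Iqhas: "((\<lambda>s. s ^ (N - 1) * exp (- q * U s)) has_integral Iq) {0..R}"
    unfolding Iq_def using Iqc integrable_continuous_interval has_integral_integral by blast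
  have Ip0: "Ip > 0"
  proof -
    have "Ip \<ge> 0" using Iphas by (rule has_integral_nonneg) auto
    moreover have "Ip \<noteq> 0"
    proof
      assume "Ip = 0"
      then have "R ^ (N - 1) * exp (p * U R) = 0"
        using has_integral_0_cbox_imp_0[of 0 R "\<lambda>s. s ^ (N - 1) * exp (p * U s)" R] Ipc Iphas R
        by auto
      then show False using R by simp
    qed
    ultimately show ?thesis by simp
  qed
  have Iq0: "Iq > 0"
  proof -
    have "Iq \<ge> 0" using Iqhas by (rule has_integral_nonneg) auto
    moreover have "Iq \<noteq> 0"
    proof
      assume "Iq = 0"
      then have "R ^ (N - 1) * exp (- q * U R) = 0"
        using has_integral_0_cbox_imp_0[of 0 R "\<lambda>s. s ^ (N - 1) * exp (- q * U s)" R] Iqc Iqhas R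
        by auto
      then show False using R by simp
    qed
    ultimately show ?thesis by simp
  qed
  define F where "F s = R ^ N / real N * (A * exp (p * U s) / (p * Ip) + B * exp (- q * U s) / (q * Iq))" for s
  have Fcont: "continuous_on {0..R} F"
    unfolding F_def by (intro continuous_intros Ucont) (use Ip0 Iq0 p q in auto)
  have Fder: "(F has_real_derivative \<epsilon>\<^sup>2 * g s * (Udd s + ((real N - 1) / s + gd s / g s) * Ud s) * Ud s) (at s)"
    if s: "s \<in> {0<..<R}" for s
  proof -
    have "(F has_real_derivative R ^ N / real N * (A * exp (p * U s) / Ip - B * exp (- q * U s) / Iq) * Ud s) (at s)"
      unfolding F_def
      using Ip0 Iq0 p q Npos by (auto intro!: derivative_eq_intros Uder[OF s] simp: field_simps)
    then show ?thesis using eq s by (simp add: Ip_def Iq_def)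
  qed
  have gpos: "g s > 0" if "s \<in> {0..R}" for s using g_pos that by auto
  define G where "G s = s ^ N * F s - \<epsilon>\<^sup>2 / 2 * s ^ N * g s * (Ud s)\<^sup>2" for s
  define Gd where "Gd s = real N * s ^ (N - 1) * F s
     + \<epsilon>\<^sup>2 / 2 * (((real N - 2) * g s + s * gd s) * s ^ (N - 1) * (Ud s)\<^sup>2)" for s
  have Gder: "(G has_real_derivative Gd s) (at s)" if s: "s \<in> {0<..<R}" for s
  proof -
    have sN: "s ^ N = s * s ^ (N - 1)" using N by (cases N) auto
    have "(G has_real_derivative real N * s ^ (N - 1) * F s + s ^ N * (\<epsilon>\<^sup>2 * g s * (Udd s + ((real N - 1) / s + gd s / g s) * Ud s) * Ud s)
       - \<epsilon>\<^sup>2 / 2 * ((real N * s ^ (N - 1) * g s + s ^ N * gd s) * (Ud s)\<^sup>2 + s ^ N * g s * (2 * Ud s * Udd s))) (at s)"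
      unfolding G_def
      by (auto intro!: derivative_eq_intros Fder[OF s] gder[OF s] Uder[OF s]
           Udd[rule_format, OF s] simp: field_simps power2_eq_square)
    moreover have "real N * s ^ (N - 1) * F s + s ^ N * (\<epsilon>\<^sup>2 * g s * (Udd s + ((real N - 1) / s + gd s / g s) * Ud s) * Ud s)
       - \<epsilon>\<^sup>2 / 2 * ((real N * s ^ (N - 1) * g s + s ^ N * gd s) * (Ud s)\<^sup>2 + s ^ N * g s * (2 * Ud s * Udd s)) = Gd s"
      using s gpos[of s] unfolding Gd_def sN by (simp add: field_simps power2_eq_square)
    ultimately show ?thesis by simp
  qed
  have G0: "G 0 = 0" using N unfolding G_def by simp
  have Gcont: "continuous_on {0..R} G"
    unfolding G_def by (intro continuous_intros Fcont gcont Ud_cont)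
  have FTC1: "(Gd has_integral (G R - G 0)) {0..R}"
    using R Gcont Gder
    by (intro fundamental_theorem_of_calculus_interior) (auto simp: has_real_derivative_iff_has_vector_derivative[symmetric])
  have Fint: "((\<lambda>s. real N * s ^ (N - 1) * F s) has_integral R ^ N * (A / p + B / q)) {0..R}"
  proof -
    have h: "((\<lambda>s. (s ^ (N - 1) * exp (p * U s)) * (R ^ N * A / (p * Ip)) + (s ^ (N - 1) * exp (- q * U s)) * (R ^ N * B / (q * Iq)))
       has_integral Ip * (R ^ N * A / (p * Ip)) + Iq * (R ^ N * B / (q * Iq))) {0..R}"
      by (intro has_integral_add has_integral_mult_left Iphas Iqhas)
    have e1: "(\<lambda>s. real N * s ^ (N - 1) * F s) = (\<lambda>s. (s ^ (N - 1) * exp (p * U s)) * (R ^ N * A / (p * Ip)) + (s ^ (N - 1) * exp (- q * U s)) * (R ^ N * B / (q * Iq)))"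
      using Npos by (auto simp: F_def field_simps)
    have e2: "Ip * (R ^ N * A / (p * Ip)) + Iq * (R ^ N * B / (q * Iq)) = R ^ N * (A / p + B / q)"
      using Ip0 Iq0 p q by (simp add: field_simps)
    show ?thesis using h e1 e2 by simp
  qed
  define K where "K = \<epsilon>\<^sup>2 / 2 * g R * (Ud R)\<^sup>2"
  have GR: "G R = R ^ N * (F R - K)" unfolding G_def K_def by (simp add: algebra_simps)
  have K: "K = R\<^sup>2 * (A - B)\<^sup>2 / (2 * (real N)\<^sup>2 * \<epsilon>\<^sup>2 * g R)"
    using gpos[of R] R \<epsilon> Npos unfolding K_def bcR by (simp add: field_simps power2_eq_square)
  define L1 where "L1 = integral {0..R} (\<lambda>s. ((real N - 2) * g s + s * gd s) / R ^ N * s ^ (N - 1) * (Ud s)\<^sup>2)"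
  have L1: "\<epsilon>\<^sup>2 / 2 * L1 = F R - K - (A / p + B / q)"
  proof -
    have h: "((\<lambda>s. (Gd s - real N * s ^ (N - 1) * F s) * (2 / (\<epsilon>\<^sup>2 * R ^ N))) has_integral
         (G R - G 0 - R ^ N * (A / p + B / q)) * (2 / (\<epsilon>\<^sup>2 * R ^ N))) {0..R}"
      by (intro has_integral_mult_left has_integral_diff FTC1 Fint)
    have e1: "(\<lambda>s. (Gd s - real N * s ^ (N - 1) * F s) * (2 / (\<epsilon>\<^sup>2 * R ^ N))) =
       (\<lambda>s. ((real N - 2) * g s + s * gd s) / R ^ N * s ^ (N - 1) * (Ud s)\<^sup>2)"
      using \<epsilon> R by (auto simp: Gd_def field_simps)
    have "L1 = (G R - G 0 - R ^ N * (A / p + B / q)) * (2 / (\<epsilon>\<^sup>2 * R ^ N))"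
      unfolding L1_def using h[unfolded e1] by (rule integral_unique)
    also have "\<dots> = (R ^ N * (F R - K) - R ^ N * (A / p + B / q)) * (2 / (\<epsilon>\<^sup>2 * R ^ N))"
      using G0 GR by simp
    also have "\<dots> = (F R - K - (A / p + B / q)) * (R ^ N * (2 / (\<epsilon>\<^sup>2 * R ^ N)))"
      by (simp only: algebra_simps)
    also have "R ^ N * (2 / (\<epsilon>\<^sup>2 * R ^ N)) = 2 / \<epsilon>\<^sup>2" using R by simp
    finally show ?thesis using \<epsilon> by (simp add: field_simps)
  qed
  define H where "H s = F s - \<epsilon>\<^sup>2 / 2 * g s * (Ud s)\<^sup>2" for s
  define Hd where "Hd s = \<epsilon>\<^sup>2 / 2 * ((2 * (real N - 1) * g s + s * gd s) / s * (Ud s)\<^sup>2)" for s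
  have Hder: "(H has_real_derivative Hd s) (at s)" if s: "s \<in> {0<..<R}" for s
  proof -
    have "(H has_real_derivative \<epsilon>\<^sup>2 * g s * (Udd s + ((real N - 1) / s + gd s / g s) * Ud s) * Ud s
       - \<epsilon>\<^sup>2 / 2 * (gd s * (Ud s)\<^sup>2 + g s * (2 * Ud s * Udd s))) (at s)"
      unfolding H_def
      by (auto intro!: derivative_eq_intros Fder[OF s] gder[OF s] Uder[OF s]
           Udd[rule_format, OF s] simp: field_simps power2_eq_square)
    moreover have "\<epsilon>\<^sup>2 * g s * (Udd s + ((real N - 1) / s + gd s / g s) * Ud s) * Ud s
       - \<epsilon>\<^sup>2 / 2 * (gd s * (Ud s)\<^sup>2 + g s * (2 * Ud s * Udd s)) = Hd s"
      using s gpos[of s] unfolding Hd_def by (simp add: field_simps power2_eq_square)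
    ultimately show ?thesis by simp
  qed
  have Hcont: "continuous_on {a..R} H"
    unfolding H_def using a0
    by (intro continuous_intros continuous_on_subset[OF Fcont] continuous_on_subset[OF gcont]
        continuous_on_subset[OF Ud_cont]) auto
  have FTC2: "(Hd has_integral (H R - H a)) {a..R}"
    using aR Hcont Hder a0
    by (intro fundamental_theorem_of_calculus_interior) (auto simp: has_real_derivative_iff_has_vector_derivative[symmetric])
  define L2 where "L2 = integral {a..R} (\<lambda>s. (2 * (real N - 1) * g s + s * gd s) / s * (Ud s)\<^sup>2)"
  have L2: "\<epsilon>\<^sup>2 / 2 * L2 = H R - H a"
  proof -
    have h: "((\<lambda>s. Hd s * (2 / \<epsilon>\<^sup>2)) has_integral (H R - H a) * (2 / \<epsilon>\<^sup>2)) {a..R}"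
      by (intro has_integral_mult_left FTC2)
    have e1: "(\<lambda>s. Hd s * (2 / \<epsilon>\<^sup>2)) = (\<lambda>s. (2 * (real N - 1) * g s + s * gd s) / s * (Ud s)\<^sup>2)"
    proof
      fix s show "Hd s * (2 / \<epsilon>\<^sup>2) = (2 * (real N - 1) * g s + s * gd s) / s * (Ud s)\<^sup>2"
        using \<epsilon> by (cases "s = 0") (simp_all add: Hd_def field_simps)
    qed
    have "L2 = (H R - H a) * (2 / \<epsilon>\<^sup>2)"
      unfolding L2_def using h[unfolded e1] by (rule integral_unique)
    then show ?thesis using \<epsilon> by (simp add: field_simps)
  qed
  have FR: "F R = K + A / p + B / q + \<epsilon>\<^sup>2 / 2 * L1" using L1 by linarith
  have Fa: "F a = A / p + B / q + \<epsilon>\<^sup>2 / 2 * L1 - (- \<epsilon>\<^sup>2 / 2 * g a * (Ud a)\<^sup>2 + \<epsilon>\<^sup>2 / 2 * L2)"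
  proof -
    have "H R = F R - K" "H a = F a - \<epsilon>\<^sup>2 / 2 * g a * (Ud a)\<^sup>2" unfolding H_def K_def by simp_all
    then show ?thesis using L1 L2 by linarith
  qed
  show ?thesis
    unfolding Let_def Ip_def[symmetric] Iq_def[symmetric] a_def[symmetric] L1_def[symmetric] L2_def[symmetric]
      F_def[symmetric]
    using FR Fa K by simp
qed

end
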